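(* Let $X$ be a Tychonoff space which is a finite union $X=X_1\cup\dots\cup X_k$ of closed subsets $X_i$, each of which is a $\Delta$-space. Then $X$ is a $\Delta$-space. In particular, a finite union of compact $\Delta$-subspaces of a Hausdorff space is a $\Delta$-space.
   Context: A topological space $X$ is a $\Delta$-space if for every decreasing sequence $\{D_n:n\in\omega\}$ of subsets of $X$ with $\bigcap_n D_n=\emptyset$ there is a decreasing sequence $\{V_n:n\in\omega\}$ of open subsets of $X$ with $D_n\subseteq V_n$ for all $n$ and $\bigcap_n V_n=\emptyset$. *)

theory Defs
  imports "HOL-Analysis.Analysis"
begin

definition tychonoff_space :: "'a topology \<Rightarrow> bool" where
  "tychonoff_space X \<longleftrightarrow> completely_regular_space X \<and> Hausdorff_space X"

definition delta_space :: "'a topology \<Rightarrow> bool" where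
  "delta_space X \<longleftrightarrow>
    (\<forall>D :: nat \<Rightarrow> 'a set.
       (\<forall>n. D n \<subseteq> topspace X) \<and> (\<forall>n. D (Suc n) \<subseteq> D n) \<and> (\<Inter>n. D n) = {}
       \<longrightarrow> (\<exists>V :: nat \<Rightarrow> 'a set.
              (\<forall>n. openin X (V n)) \<and> (\<forall>n. V (Suc n) \<subseteq> V n) \<and>
              (\<forall>n. D n \<subseteq> V n) \<and> (\<Inter>n. V n) = {}))"

end

theory Submission
  imports Defs
begin

lemma union_delta:
  fixes k :: nat
  assumes cov: "topspace X = (\<Union>i<k. Xs i)"
    and cl: "\<And>i. i<k \<Longrightarrow> closedin X (Xs i)"
    and dl: "\<And>i. i<k \<Longrightarrow> delta_space (subtopology X (Xs i))"
  shows "delta_space X"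
  unfolding delta_space_def
proof (intro allI impI)
  fix D :: "nat \<Rightarrow> _ set"
  assume D: "(\<forall>n. D n \<subseteq> topspace X) \<and> (\<forall>n. D (Suc n) \<subseteq> D n) \<and> (\<Inter>n. D n) = {}"
  have ex: "\<exists>V. (\<forall>n. openin (subtopology X (Xs i)) (V n)) \<and> (\<forall>n. V (Suc n) \<subseteq> V n) \<and>
              (\<forall>n. D n \<inter> Xs i \<subseteq> V n) \<and> (\<Inter>n. V n) = {}" if i: "i<k" for i
  proof -
    have "(\<forall>n. D n \<inter> Xs i \<subseteq> topspace (subtopology X (Xs i))) \<and> (\<forall>n. D (Suc n) \<inter> Xs i \<subseteq> D n \<inter> Xs i)
          \<and> (\<Inter>n. D n \<inter> Xs i) = {}"
      using D by auto
    then show ?thesis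
      by (rule mp[OF dl[OF i, unfolded delta_space_def, THEN spec[of _ "\<lambda>n. D n \<inter> Xs i"]]])
  qed
  have ex2: "\<forall>i\<in>{..<k}. \<exists>V. (\<forall>n. openin (subtopology X (Xs i)) (V n)) \<and> (\<forall>n. V (Suc n) \<subseteq> V n) \<and> (\<forall>n. D n \<inter> Xs i \<subseteq> V n) \<and> (\<Inter>n. V n) = {}"
    using ex by simp
  from bchoice[OF ex2] obtain W where W0: "\<forall>i\<in>{..<k}. (\<forall>n. openin (subtopology X (Xs i)) (W i n)) \<and> (\<forall>n. W i (Suc n) \<subseteq> W i n) \<and> (\<forall>n. D n \<inter> Xs i \<subseteq> W i n) \<and> (\<Inter>n. W i n) = {}"
    by (elim exE) (rule that)
  have W: "(\<forall>n. openin (subtopology X (Xs i)) (W i n)) \<and> (\<forall>n. W i (Suc n) \<subseteq> W i n) \<and> (\<forall>n. D n \<inter> Xs i \<subseteq> W i n) \<and> (\<Inter>n. W i n) = {}" if "i<k" for i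
    using W0 that by simp
  have Wo: "openin (subtopology X (Xs i)) (W i n)" if "i<k" for i n using W[OF that] by simp
  have Wd: "W i (Suc n) \<subseteq> W i n" if "i<k" for i n using W[OF that] by simp
  have Ws: "D n \<inter> Xs i \<subseteq> W i n" if "i<k" for i n using W[OF that] by simp
  have Wi: "(\<Inter>n. W i n) = {}" if "i<k" for i using W[OF that] by simp
  define V where "V n = topspace X - (\<Union>i<k. Xs i - W i n)" for n
  have clo: "closedin X (Xs i - W i n)" if i: "i<k" for i n
  proof -
    have "closedin (subtopology X (Xs i)) (topspace (subtopology X (Xs i)) - W i n)"
      using Wo[OF i] by (intro closedin_diff closedin_topspace)
    moreover have "topspace (subtopology X (Xs i)) - W i n = Xs i - W i n"
      using closedin_subset[OF cl[OF i]] by auto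
    ultimately show ?thesis using closedin_closed_subtopology[OF cl[OF i]] by auto
  qed
  show "\<exists>V. (\<forall>n. openin X (V n)) \<and> (\<forall>n. V (Suc n) \<subseteq> V n) \<and> (\<forall>n. D n \<subseteq> V n) \<and> (\<Inter>n. V n) = {}"
  proof (intro exI conjI allI)
    fix n
    show "openin X (V n)" unfolding V_def
      by (intro openin_diff openin_topspace closedin_Union finite_imageI) (auto intro: clo)
    show "V (Suc n) \<subseteq> V n" unfolding V_def
    proof
      fix x assume x: "x \<in> topspace X - (\<Union>i<k. Xs i - W i (Suc n))"
      have "x \<notin> Xs i - W i n" if "i<k" for i using Wd[OF that, of n] x that by blast
      then show "x \<in> topspace X - (\<Union>i<k. Xs i - W i n)" using x by blast
    qed
    show "D n \<subseteq> V n" unfolding V_def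
    proof
      fix x assume x: "x \<in> D n"
      have "x \<notin> Xs i - W i n" if "i<k" for i using Ws[OF that, of n] x by blast
      then show "x \<in> topspace X - (\<Union>i<k. Xs i - W i n)" using x D by blast
    qed
  next
    show "(\<Inter>n. V n) = {}"
    proof (rule ccontr)
      assume "(\<Inter>n. V n) \<noteq> {}"
      then obtain x where x: "\<And>n. x \<in> V n" by blast
      then have "x \<in> topspace X" unfolding V_def by blast
      then obtain i where i: "i<k" "x \<in> Xs i" using cov by auto
      have "\<And>n. x \<in> W i n" using x i unfolding V_def by blast
      then show False using Wi[OF i(1)] by blast
    qed
  qed
qed

theorem proposition5p4:
  shows "(\<forall>(X :: 'a topology) (k :: nat) (Xs :: nat \<Rightarrow> 'a set).
            tychonoff_space X \<and> topspace X = (\<Union>i<k. Xs i) \<and>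
            (\<forall>i<k. closedin X (Xs i) \<and> delta_space (subtopology X (Xs i)))
            \<longrightarrow> delta_space X)
       \<and> (\<forall>(Y :: 'b topology) (k :: nat) (Ks :: nat \<Rightarrow> 'b set).
            Hausdorff_space Y \<and>
            (\<forall>i<k. Ks i \<subseteq> topspace Y \<and> compactin Y (Ks i) \<and> delta_space (subtopology Y (Ks i)))
            \<longrightarrow> delta_space (subtopology Y (\<Union>i<k. Ks i)))"
proof (intro conjI allI impI)
  fix X :: "'a topology" and k and Xs :: "nat \<Rightarrow> 'a set"
  assume "tychonoff_space X \<and> topspace X = (\<Union>i<k. Xs i) \<and>
            (\<forall>i<k. closedin X (Xs i) \<and> delta_space (subtopology X (Xs i)))"
  then show "delta_space X" using union_delta[where X=X and k=k and Xs=Xs] by blast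
next
  fix Y :: "'b topology" and k and Ks :: "nat \<Rightarrow> 'b set"
  assume A: "Hausdorff_space Y \<and>
            (\<forall>i<k. Ks i \<subseteq> topspace Y \<and> compactin Y (Ks i) \<and> delta_space (subtopology Y (Ks i)))"
  let ?U = "\<Union>i<k. Ks i"
  show "delta_space (subtopology Y ?U)"
  proof (rule union_delta[where k=k and Xs=Ks])
    show "topspace (subtopology Y ?U) = ?U" using A by auto
  next
    fix i assume i: "i<k"
    have sub: "Ks i \<subseteq> ?U" using i by auto
    have "closedin Y (Ks i)" using A i compactin_imp_closedin by blast
    then show "closedin (subtopology Y ?U) (Ks i)"
      using sub closedin_subset_topspace by blast
    have "subtopology (subtopology Y ?U) (Ks i) = subtopology Y (Ks i)"
      using sub by (simp add: subtopology_subtopology Int_absorb1)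
    then show "delta_space (subtopology (subtopology Y ?U) (Ks i))" using A i by simp
  qed
qed

end
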